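(* Let $n\geq1$ and define the linear map $$\alpha:CF(n)\oplus CF(n)\oplus\mathrm{Ker}(\partial_n)\oplus\mathrm{Ker}(\partial_n)\to\mathrm{Im}(\partial_n)\oplus\mathrm{Ker}(\partial_n),$$ $$(u,v,w,t)\mapsto(\partial_n\eta_n u+\partial_n v,\ \partial_n\eta_n u+w+t+\eta_n w).$$ Then $\mathrm{Ker}(\alpha)$ is exactly the set of $(u,v,w,t)$ in the domain of $\alpha$ satisfying $$\partial_nv=w+t+\eta_n w,\qquad \partial_nu=w+\eta_n t+\eta_n w,\qquad \partial_nw=0.$$
   Context: $CF(n)$ is the $\mathbb{Z}_2$-vector space with basis the tuples $(\epsilon_1,\dots,\epsilon_{2n-1})\in\{\pm1\}^{2n-1}$. Linear maps $\eta_n,\tilde\partial_n:CF(n)\to CF(n)$ are given on basis elements by $\eta_n(\epsilon_1,\dots,\epsilon_{2n-1})=(-\epsilon_1,\dots,-\epsilon_{2n-1})$ and $\tilde\partial_n(\epsilon_1,\dots,\epsilon_{2n-1})=\sum_{i=1}^{2n-1}(\epsilon_1,\dots,-\epsilon_i,\dots,\epsilon_{2n-1})$, and $\partial_n=\tilde\partial_n+\eta_n$. *)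

theory Defs
  imports Main "HOL-Library.Z2"
begin

text \<open>Basis tuples (eps_1,...,eps_{2n-1}) in {+1,-1}^{2n-1}, encoded as bool lists of
length 2n-1 (True = +1, False = -1). Negating a sign = logical negation.\<close>
definition basisF :: "nat \<Rightarrow> bool list set" where
  "basisF n = {xs. length xs = 2 * n - 1}"

definition CF :: "nat \<Rightarrow> (bool list \<Rightarrow> bit) set" where
  "CF n = {f. \<forall>x. x \<notin> basisF n \<longrightarrow> f x = 0}"

definition vadd :: "(bool list \<Rightarrow> bit) \<Rightarrow> (bool list \<Rightarrow> bit) \<Rightarrow> (bool list \<Rightarrow> bit)" where
  "vadd f g = (\<lambda>y. f y + g y)"

definition vzero :: "bool list \<Rightarrow> bit" where
  "vzero = (\<lambda>_. 0)"

definition bvec :: "bool list \<Rightarrow> (bool list \<Rightarrow> bit)" where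
  "bvec x = (\<lambda>y. if y = x then 1 else 0)"

definition linext :: "nat \<Rightarrow> (bool list \<Rightarrow> (bool list \<Rightarrow> bit)) \<Rightarrow> (bool list \<Rightarrow> bit) \<Rightarrow> (bool list \<Rightarrow> bit)" where
  "linext n g f = (\<lambda>y. \<Sum>x\<in>basisF n. f x * g x y)"

definition eta :: "nat \<Rightarrow> (bool list \<Rightarrow> bit) \<Rightarrow> (bool list \<Rightarrow> bit)" where
  "eta n = linext n (\<lambda>x. bvec (map Not x))"

definition dtilde :: "nat \<Rightarrow> (bool list \<Rightarrow> bit) \<Rightarrow> (bool list \<Rightarrow> bit)" where
  "dtilde n = linext n (\<lambda>x. (\<lambda>y. \<Sum>i<2 * n - 1. bvec (x[i := \<not> x ! i]) y))"

definition bd :: "nat \<Rightarrow> (bool list \<Rightarrow> bit) \<Rightarrow> (bool list \<Rightarrow> bit)" where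
  "bd n f = vadd (dtilde n f) (eta n f)"

definition KerBd :: "nat \<Rightarrow> (bool list \<Rightarrow> bit) set" where
  "KerBd n = {f \<in> CF n. bd n f = vzero}"

definition ImBd :: "nat \<Rightarrow> (bool list \<Rightarrow> bit) set" where
  "ImBd n = bd n ` CF n"

definition alpha_dom :: "nat \<Rightarrow> ((bool list \<Rightarrow> bit) \<times> (bool list \<Rightarrow> bit) \<times> (bool list \<Rightarrow> bit) \<times> (bool list \<Rightarrow> bit)) set" where
  "alpha_dom n = CF n \<times> CF n \<times> KerBd n \<times> KerBd n"

definition alpha :: "nat \<Rightarrow> (bool list \<Rightarrow> bit) \<times> (bool list \<Rightarrow> bit) \<times> (bool list \<Rightarrow> bit) \<times> (bool list \<Rightarrow> bit)
    \<Rightarrow> (bool list \<Rightarrow> bit) \<times> (bool list \<Rightarrow> bit)" where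
  "alpha n = (\<lambda>(u, v, w, t).
     (vadd (bd n (eta n u)) (bd n v),
      vadd (vadd (vadd (bd n (eta n u)) w) t) (eta n w)))"

definition alpha_ker :: "nat \<Rightarrow> ((bool list \<Rightarrow> bit) \<times> (bool list \<Rightarrow> bit) \<times> (bool list \<Rightarrow> bit) \<times> (bool list \<Rightarrow> bit)) set" where
  "alpha_ker n = {p \<in> alpha_dom n. alpha n p = (vzero, vzero)}"

end

theory Submission
  imports Defs
begin

lemma bit_add_self[simp]: "(x::bit) + x = 0"
  by (cases x) auto

lemma bit_add_eq0: "(a::bit) + b = 0 \<longleftrightarrow> a = b"
  by (cases a; cases b) auto

lemma finite_basisF: "finite (basisF n)"
proof -
  have "finite {xs. set xs \<subseteq> (UNIV::bool set) \<and> length xs = 2*n-1}"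
    by (rule finite_lists_length_eq) simp
  thus ?thesis by (simp add: basisF_def)
qed

lemma eta_pt: "eta n f y = (if length y = 2*n-1 then f (map Not y) else 0)"
proof -
  have "eta n f y = (\<Sum>x\<in>basisF n. if x = map Not y then f x else 0)"
    unfolding eta_def linext_def bvec_def
    by (rule sum.cong) (auto simp: map_idI)
  also have "\<dots> = (if map Not y \<in> basisF n then f (map Not y) else 0)"
    using finite_basisF by (simp add: sum.delta)
  finally show ?thesis by (simp add: basisF_def)
qed

lemma flip_eq: "i < length x \<Longrightarrow> (x[i := \<not> x ! i] = y) = (x = y[i := \<not> y ! i])"
  proof
  assume i: "i < length x"
  { assume "x[i := \<not> x ! i] = y"
    thus "x = y[i := \<not> y ! i]" using i by auto }
  { assume "x = y[i := \<not> y ! i]"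
    moreover have "i < length y" using i \<open>x = y[i := \<not> y ! i]\<close> by simp
    ultimately show "x[i := \<not> x ! i] = y" by simp }
qed

lemma flip_eq2: "i < length x \<Longrightarrow> (y = x[i := \<not> x ! i]) = (x = y[i := \<not> y ! i])"
  using flip_eq[of i x y] by auto

lemma dtilde_pt: "dtilde n f y = (if length y = 2*n-1 then (\<Sum>i<2*n-1. f (y[i := \<not> y ! i])) else 0)"
proof -
  have "dtilde n f y = (\<Sum>x\<in>basisF n. \<Sum>i<2*n-1. if x = y[i := \<not> y ! i] then f x else 0)"
    unfolding dtilde_def linext_def
  proof (rule sum.cong[OF refl])
    fix x assume x: "x \<in> basisF n"
    have "f x * (\<Sum>i<2 * n - 1. bvec (x[i := \<not> x ! i]) y)
        = (\<Sum>i<2*n-1. f x * bvec (x[i := \<not> x ! i]) y)" by (rule sum_distrib_left)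
    also have "\<dots> = (\<Sum>i<2*n-1. if x = y[i := \<not> y ! i] then f x else 0)"
    proof (rule sum.cong[OF refl])
      fix i assume "i \<in> {..<2*n-1}"
      hence "i < length x" using x by (simp add: basisF_def)
      thus "f x * bvec (x[i := \<not> x ! i]) y = (if x = y[i := \<not> y ! i] then f x else 0)"
        unfolding bvec_def using flip_eq2[of i x y] by simp
    qed
    finally show "f x * (\<Sum>i<2 * n - 1. bvec (x[i := \<not> x ! i]) y)
        = (\<Sum>i<2*n-1. if x = y[i := \<not> y ! i] then f x else 0)" .
  qed
  also have "\<dots> = (\<Sum>i<2*n-1. \<Sum>x\<in>basisF n. if x = y[i := \<not> y ! i] then f x else 0)"
    by (rule sum.swap)
  also have "\<dots> = (\<Sum>i<2*n-1. if y[i := \<not> y ! i] \<in> basisF n then f (y[i := \<not> y ! i]) else 0)"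
    using finite_basisF by (simp only: sum.delta)
  also have "\<dots> = (if length y = 2*n-1 then (\<Sum>i<2*n-1. f (y[i := \<not> y ! i])) else 0)"
    by (simp add: basisF_def)
  finally show ?thesis .
qed

lemma bd_pt: "bd n f y = (if length y = 2*n-1 then (\<Sum>i<2*n-1. f (y[i := \<not> y ! i])) + f (map Not y) else 0)"
  by (simp add: bd_def vadd_def dtilde_pt eta_pt)

lemma map_not_flip: "i < length y \<Longrightarrow> map Not (y[i := \<not> y ! i]) = (map Not y)[i := \<not> (map Not y) ! i]"
  by (simp add: map_update)

lemma bd_eta: "bd n (eta n f) = eta n (bd n f)"
proof
  fix y
  show "bd n (eta n f) y = eta n (bd n f) y"
  proof (cases "length y = 2*n-1")
    case False thus ?thesis by (simp add: bd_pt eta_pt)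
  next
    case True
    have "bd n (eta n f) y = (\<Sum>i<2*n-1. eta n f (y[i := \<not> y ! i])) + eta n f (map Not y)"
      by (subst bd_pt) (simp add: True)
    also have "\<dots> = (\<Sum>i<2*n-1. f ((map Not y)[i := \<not> (map Not y) ! i])) + f y"
    proof -
      have "(\<Sum>i<2*n-1. eta n f (y[i := \<not> y ! i])) = (\<Sum>i<2*n-1. f ((map Not y)[i := \<not> (map Not y) ! i]))"
      proof (rule sum.cong[OF refl])
        fix i assume "i \<in> {..<2*n-1}"
        hence i: "i < length y" using True by simp
        show "eta n f (y[i := \<not> y ! i]) = f ((map Not y)[i := \<not> (map Not y) ! i])"
          using True i by (simp add: eta_pt map_not_flip)
      qed
      moreover have "eta n f (map Not y) = f y" using True by (simp add: eta_pt comp_def)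
      ultimately show ?thesis by simp
    qed
    also have "\<dots> = eta n (bd n f) y"
      using True by (simp add: eta_pt bd_pt comp_def)
    finally show ?thesis .
  qed
qed

lemma eta_eta: "f \<in> CF n \<Longrightarrow> eta n (eta n f) = f"
  by (rule ext) (auto simp: eta_pt CF_def basisF_def comp_def)

lemma eta_vadd: "eta n (vadd f g) = vadd (eta n f) (eta n g)"
  by (rule ext) (simp add: eta_pt vadd_def)

lemma bd_CF: "bd n f \<in> CF n"
  by (simp add: CF_def bd_pt basisF_def)

lemma vadd_eq0: "vadd A B = vzero \<longleftrightarrow> A = B"
  by (simp add: vadd_def vzero_def fun_eq_iff bit_add_eq0 del: add_bit_eq_xor)

lemma vadd_assoc: "vadd (vadd A B) C = vadd A (vadd B C)"
  by (simp add: vadd_def add.assoc del: add_bit_eq_xor)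

theorem lemma4p4:
  fixes n :: nat
  assumes "n \<ge> 1"
  shows "alpha_ker n =
    {(u, v, w, t). (u, v, w, t) \<in> alpha_dom n \<and>
       bd n v = vadd (vadd w t) (eta n w) \<and>
       bd n u = vadd (vadd w (eta n t)) (eta n w) \<and>
       bd n w = vzero}"
proof (rule set_eqI)
  fix p :: "(bool list \<Rightarrow> bit) \<times> (bool list \<Rightarrow> bit) \<times> (bool list \<Rightarrow> bit) \<times> (bool list \<Rightarrow> bit)"
  obtain u v w t where p: "p = (u, v, w, t)" by (cases p) auto
  show "p \<in> alpha_ker n \<longleftrightarrow> p \<in> {(u, v, w, t). (u, v, w, t) \<in> alpha_dom n \<and>
       bd n v = vadd (vadd w t) (eta n w) \<and>
       bd n u = vadd (vadd w (eta n t)) (eta n w) \<and>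
       bd n w = vzero}"
  proof (cases "p \<in> alpha_dom n")
    case False thus ?thesis by (simp add: alpha_ker_def p)
  next
    case True
    hence u: "u \<in> CF n" and w: "w \<in> CF n" and t: "t \<in> CF n" and bw: "bd n w = vzero"
      by (auto simp: p alpha_dom_def KerBd_def)
    have ee: "eta n (eta n (bd n u)) = bd n u" by (rule eta_eta[OF bd_CF])
    have ew: "eta n (eta n w) = w" by (rule eta_eta[OF w])
    have et: "eta n (eta n t) = t" by (rule eta_eta[OF t])
    let ?X = "eta n (bd n u)"
    have "alpha n p = (vzero, vzero) \<longleftrightarrow>
        (bd n v = vadd (vadd w t) (eta n w) \<and> ?X = vadd (vadd w t) (eta n w))"
      by (auto simp: alpha_def p bd_eta vadd_eq0 vadd_assoc)
    also have "(?X = vadd (vadd w t) (eta n w)) \<longleftrightarrow> bd n u = vadd (vadd w (eta n t)) (eta n w)"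
    proof
      assume "?X = vadd (vadd w t) (eta n w)"
      hence "eta n ?X = eta n (vadd (vadd w t) (eta n w))" by simp
      thus "bd n u = vadd (vadd w (eta n t)) (eta n w)"
        by (simp add: ee ew eta_vadd) (simp add: vadd_def fun_eq_iff ac_simps del: add_bit_eq_xor)
    next
      assume "bd n u = vadd (vadd w (eta n t)) (eta n w)"
      hence "?X = eta n (vadd (vadd w (eta n t)) (eta n w))" by simp
      thus "?X = vadd (vadd w t) (eta n w)"
        by (simp add: et ew eta_vadd) (simp add: vadd_def fun_eq_iff ac_simps del: add_bit_eq_xor)
    qed
    finally show ?thesis using True bw by (auto simp: alpha_ker_def p)
  qed
qed

end
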